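(* In the transfer model and with the freeze algorithm $\mathrm{CalcFreeze}$ described in the context, suppose the transaction graph $G$ is acyclic and that no burn transactions occur between the disputed transaction $t_0$ and the freeze time. Then when the algorithm terminates, every edge $t=(a\to b)$ of $G$ satisfies $$ \mathrm{ob}(b,t)\le \mathrm{obsum}(a,t). $$ That is, the obligation passed to $b$ because of $t$ does not exceed the obligations passed to $a$ through transactions into $a$ that occurred before $t$.
   Context: Transfer model. There is a finite set of addresses, each holding a nonnegative token balance. A transaction is a transfer $t=(a\to b)$ of value $\mathrm{val}(t)\ge 0$ from address $a$ to address $b$; it decreases the balance of $a$ by $\mathrm{val}(t)$ and increases the balance of $b$ by $\mathrm{val}(t)$. Transactions are totally ordered in time, and each transaction is valid: the sender's balance never becomes negative. There are no burns, i.e. no operation removes tokens from an address other than a transfer. The disputed transaction is $t_0=(v\to a_0)$ with $s=\mathrm{val}(t_0)$. The freeze happens at a time after $t_0$ and after all transactions considered. For an address $a$, $\mathrm{Bal}(a)$ denotes its balance at the freeze time; no amounts are frozen before this freeze. Transaction graph $G$. Consider the transactions strictly after $t_0$ and before the freeze. $G$ is the directed multigraph whose edges are those transactions $(b\to c)$ for which there is a directed path of such transactions from $a_0$ to $b$ ($b=a_0$ allowed). The vertices are $a_0$ and all endpoints of these edges. Each edge keeps its time and its value $\mathrm{val}$. Algorithm $\mathrm{CalcFreeze}$ (on acyclic $G$): - Let $L$ be a topological order of the vertices of $G$, i.e. for every edge $a\to b$, $a$ precedes $b$. - Initialize $\mathrm{oblig}(a)=0$ for all $a\neq a_0$ and $\mathrm{oblig}(a_0)=s$.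 - For each $a$ in the order $L$: - Set $\tau=\mathrm{oblig}(a)$, $\mathrm{toFreeze}(a)=\min(\tau,\mathrm{Bal}(a))$ and $\tau'=\tau-\mathrm{toFreeze}(a)$. - If $\tau'\le 0$, proceed to the next vertex. - Otherwise, iterate over the outgoing edges $t=(a\to b)$ of $a$ in $G$ in reverse chronological order (most recent first). For each such edge set $\mathrm{ob}(b,t)=\min(\tau',\mathrm{val}(t))$, add $\mathrm{ob}(b,t)$ to $\mathrm{oblig}(b)$, and subtract $\mathrm{ob}(b,t)$ from $\tau'$. Stop iterating over the edges of $a$ as soon as $\tau'\le 0$. - Edges never processed have $\mathrm{ob}(b,t)=0$. Definition of $\mathrm{obsum}$. Set $\mathrm{ob}(a_0,t_0)=s$. For an edge $t=(a\to b)$ of $G$, $\mathrm{obsum}(a,t)$ is the sum of $\mathrm{ob}(a,t')$ over all transactions $t'$ into $a$ that occurred before $t$, where $t'$ ranges over the edges of $G$ with destination $a$ together with $t_0$ if $a=a_0$. *)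

theory Defs
  imports Complex_Main
begin

text \<open>A transaction is a triple (sender, receiver, value). The history is a list of
transactions in chronological order (list index = time). The freeze happens after the
last transaction of the list.\<close>

type_synonym 'a tx = "'a \<times> 'a \<times> real"

definition tsrc :: "'a tx \<Rightarrow> 'a" where "tsrc t = fst t"
definition tdst :: "'a tx \<Rightarrow> 'a" where "tdst t = fst (snd t)"
definition tval :: "'a tx \<Rightarrow> real" where "tval t = snd (snd t)"

definition bal_after :: "('a \<Rightarrow> real) \<Rightarrow> 'a tx list \<Rightarrow> nat \<Rightarrow> 'a \<Rightarrow> real" where
  "bal_after init txs k a =
     init a + (\<Sum>i<k. (if tdst (txs ! i) = a then tval (txs ! i) else 0)
                    - (if tsrc (txs ! i) = a then tval (txs ! i) else 0))"

definition valid_history :: "('a \<Rightarrow> real) \<Rightarrow> 'a tx list \<Rightarrow> bool" where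
  "valid_history init txs \<longleftrightarrow>
     (\<forall>i<length txs. tval (txs ! i) \<ge> 0) \<and>
     (\<forall>k\<le>length txs. \<forall>a. bal_after init txs k a \<ge> 0)"

definition Bal :: "('a \<Rightarrow> real) \<Rightarrow> 'a tx list \<Rightarrow> 'a \<Rightarrow> real" where
  "Bal init txs a = bal_after init txs (length txs) a"

definition after_rel :: "'a tx list \<Rightarrow> nat \<Rightarrow> ('a \<times> 'a) set" where
  "after_rel txs i0 = {(tsrc (txs ! j), tdst (txs ! j)) | j. i0 < j \<and> j < length txs}"

definition G_edges :: "'a tx list \<Rightarrow> nat \<Rightarrow> 'a \<Rightarrow> nat set" where
  "G_edges txs i0 a0 = {j. i0 < j \<and> j < length txs \<and> (a0, tsrc (txs ! j)) \<in> (after_rel txs i0)\<^sup>*}"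

definition G_vertices :: "'a tx list \<Rightarrow> nat \<Rightarrow> 'a \<Rightarrow> 'a set" where
  "G_vertices txs i0 a0 = {a0} \<union> (\<lambda>j. tsrc (txs ! j)) ` G_edges txs i0 a0
                                 \<union> (\<lambda>j. tdst (txs ! j)) ` G_edges txs i0 a0"

definition G_rel :: "'a tx list \<Rightarrow> nat \<Rightarrow> 'a \<Rightarrow> ('a \<times> 'a) set" where
  "G_rel txs i0 a0 = (\<lambda>j. (tsrc (txs ! j), tdst (txs ! j))) ` G_edges txs i0 a0"

definition G_acyclic :: "'a tx list \<Rightarrow> nat \<Rightarrow> 'a \<Rightarrow> bool" where
  "G_acyclic txs i0 a0 \<longleftrightarrow> acyclic (G_rel txs i0 a0)"

definition topo_order :: "'a tx list \<Rightarrow> nat \<Rightarrow> 'a \<Rightarrow> 'a list \<Rightarrow> bool" where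
  "topo_order txs i0 a0 L \<longleftrightarrow>
     distinct L \<and> set L = G_vertices txs i0 a0 \<and>
     (\<forall>j\<in>G_edges txs i0 a0. \<exists>p q. p < q \<and> q < length L \<and>
          L ! p = tsrc (txs ! j) \<and> L ! q = tdst (txs ! j))"

text \<open>Algorithm state: obligations of vertices and obligations ob(b,t) of edges
(indexed by the transaction index of t).\<close>
type_synonym 'a state = "('a \<Rightarrow> real) \<times> (nat \<Rightarrow> real)"

fun distribute :: "'a tx list \<Rightarrow> nat list \<Rightarrow> real \<Rightarrow> 'a state \<Rightarrow> 'a state" where
  "distribute txs [] \<tau> st = st"
| "distribute txs (j # js) \<tau> (oblig, ob) =
     (if \<tau> \<le> 0 then (oblig, ob)
      else (let x = min \<tau> (tval (txs ! j)); b = tdst (txs ! j)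
            in distribute txs js (\<tau> - x) (oblig(b := oblig b + x), ob(j := x))))"

definition out_edges_desc :: "'a tx list \<Rightarrow> nat \<Rightarrow> 'a \<Rightarrow> 'a \<Rightarrow> nat list" where
  "out_edges_desc txs i0 a0 a =
     rev (filter (\<lambda>j. j \<in> G_edges txs i0 a0 \<and> tsrc (txs ! j) = a) [0..<length txs])"

definition process_vertex ::
  "('a \<Rightarrow> real) \<Rightarrow> 'a tx list \<Rightarrow> nat \<Rightarrow> 'a \<Rightarrow> 'a state \<Rightarrow> 'a \<Rightarrow> 'a state" where
  "process_vertex init txs i0 a0 st a =
     (let \<tau> = fst st a;
          toFreeze = min \<tau> (Bal init txs a);
          \<tau>' = \<tau> - toFreeze
      in distribute txs (out_edges_desc txs i0 a0 a) \<tau>' st)"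

text \<open>Run of CalcFreeze along the order L; returns the final (oblig, ob). Edges never
processed keep ob = 0.\<close>
definition calc_freeze ::
  "('a \<Rightarrow> real) \<Rightarrow> 'a tx list \<Rightarrow> nat \<Rightarrow> 'a list \<Rightarrow> 'a state" where
  "calc_freeze init txs i0 L =
     (let a0 = tdst (txs ! i0); s = tval (txs ! i0)
      in foldl (process_vertex init txs i0 a0) ((\<lambda>_. 0)(a0 := s), (\<lambda>_. 0)) L)"

text \<open>obsum(a,t): sum of ob over transactions into a before t (t0 included if a = a0,
with ob(a0,t0) = s).\<close>
definition obsum :: "'a tx list \<Rightarrow> nat \<Rightarrow> (nat \<Rightarrow> real) \<Rightarrow> 'a \<Rightarrow> nat \<Rightarrow> real" where
  "obsum txs i0 ob a j =
     (if a = tdst (txs ! i0) \<and> i0 < j then tval (txs ! i0) else 0) +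
     (\<Sum>j' \<in> {j' \<in> G_edges txs i0 (tdst (txs ! i0)). tdst (txs ! j') = a \<and> j' < j}. ob j')"

end

theory Submission
  imports Defs
begin
lemma dist_frame:
  "i \<notin> set js \<Longrightarrow> snd (distribute txs js \<tau> (og, ob)) i = ob i"
  by (induction js arbitrary: \<tau> og ob) (auto simp: Let_def)

lemma dist_fst:
  "distinct js \<Longrightarrow> (\<forall>i\<in>set js. ob i = 0) \<Longrightarrow>
   fst (distribute txs js \<tau> (og, ob)) b =
     og b + (\<Sum>i\<in>{i\<in>set js. tdst (txs!i) = b}. snd (distribute txs js \<tau> (og, ob)) i)"
proof (induction js arbitrary: \<tau> og ob)
  case Nil then show ?case by simp
next
  case (Cons j js)
  show ?case
  proof (cases "\<tau> \<le> 0")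
    case True
    then show ?thesis using Cons.prems by (simp, intro sum.neutral) auto
  next
    case False
    define x where "x = min \<tau> (tval (txs ! j))"
    define b' where "b' = tdst (txs ! j)"
    define R where "R = distribute txs js (\<tau> - x) (og(b' := og b' + x), ob(j := x))"
    have eq: "distribute txs (j # js) \<tau> (og, ob) = R"
      using False by (simp add: R_def x_def b'_def Let_def)
    have nj: "j \<notin> set js" using Cons.prems by simp
    have IH: "fst R b = (og(b' := og b' + x)) b + (\<Sum>i\<in>{i\<in>set js. tdst (txs!i) = b}. snd R i)"
      unfolding R_def using Cons.prems by (intro Cons.IH) auto
    have Rj: "snd R j = x" unfolding R_def by (simp add: dist_frame[OF nj])
    show ?thesis
    proof (cases "b' = b")
      case True
      have "{i\<in>set (j#js). tdst (txs!i) = b} = insert j {i\<in>set js. tdst (txs!i) = b}"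
        using True b'_def by auto
      then show ?thesis using eq IH Rj True nj by (simp add: sum.insert)
    next
      case False
      have "{i\<in>set (j#js). tdst (txs!i) = b} = {i\<in>set js. tdst (txs!i) = b}"
        using False b'_def by auto
      then show ?thesis using eq IH False by simp
    qed
  qed
qed

definition Inv :: "'a tx list \<Rightarrow> (nat \<Rightarrow> real) \<Rightarrow> bool" where
  "Inv txs ob \<longleftrightarrow> (\<forall>i. 0 \<le> ob i \<and> ob i \<le> max 0 (tval (txs ! i)))"

lemma dist_Inv:
  "(\<forall>i\<in>set js. tval (txs!i) \<ge> 0) \<Longrightarrow> Inv txs ob \<Longrightarrow> Inv txs (snd (distribute txs js \<tau> (og, ob)))"
proof (induction js arbitrary: \<tau> og ob)
  case Nil then show ?case by simp
next
  case (Cons j js)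
  show ?case
  proof (cases "\<tau> \<le> 0")
    case True then show ?thesis using Cons.prems by simp
  next
    case False
    have "Inv txs (ob(j := min \<tau> (tval (txs ! j))))"
      using Cons.prems False unfolding Inv_def by auto
    then show ?thesis using False Cons.prems Cons.IH by (simp add: Let_def)
  qed
qed

lemma dist_key:
  "distinct (xs @ j # ys) \<Longrightarrow> ob j = 0 \<Longrightarrow> (\<forall>i\<in>set xs. tval (txs!i) \<ge> 0) \<Longrightarrow>
   snd (distribute txs (xs @ j # ys) \<tau> (og, ob)) j \<le> max 0 (\<tau> - sum_list (map (\<lambda>i. tval (txs!i)) xs))"
proof (induction xs arbitrary: \<tau> og ob)
  case Nil
  show ?case
  proof (cases "\<tau> \<le> 0")
    case True then show ?thesis using Nil by simp
  next
    case False
    have nj: "j \<notin> set ys" using Nil by simp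
    show ?thesis using False dist_frame[OF nj, of txs] by (simp add: Let_def)
  qed
next
  case (Cons k xs)
  show ?case
  proof (cases "\<tau> \<le> 0")
    case True then show ?thesis using Cons.prems by simp
  next
    case False
    define x where "x = min \<tau> (tval (txs ! k))"
    have kj: "k \<noteq> j" using Cons.prems by auto
    have IH: "snd (distribute txs (xs @ j # ys) (\<tau> - x) (og(tdst (txs!k) := og (tdst (txs!k)) + x), ob(k := x))) j
         \<le> max 0 (\<tau> - x - sum_list (map (\<lambda>i. tval (txs!i)) xs))"
      using Cons.prems kj by (intro Cons.IH) auto
    have nn: "sum_list (map (\<lambda>i. tval (txs!i)) xs) \<ge> 0"
      using Cons.prems by (intro sum_list_nonneg) auto
    have "max 0 (\<tau> - x - sum_list (map (\<lambda>i. tval (txs!i)) xs))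
          \<le> max 0 (\<tau> - tval (txs!k) - sum_list (map (\<lambda>i. tval (txs!i)) xs))"
      using nn by (auto simp: x_def min_def max_def)
    from order_trans[OF IH this] False show ?thesis by (simp add: Let_def x_def)
  qed
qed

lemma G_edges_lt: "i \<in> G_edges txs i0 a0 \<Longrightarrow> i < length txs"
  by (simp add: G_edges_def)

lemma finite_G_edges: "finite (G_edges txs i0 a0)"
  by (rule finite_subset[of _ "{..<length txs}"]) (auto simp: G_edges_def)

lemma out_set: "set (out_edges_desc txs i0 a0 c) = {i \<in> G_edges txs i0 a0. tsrc (txs!i) = c}"
  by (auto simp: out_edges_desc_def G_edges_def)

lemma out_distinct: "distinct (out_edges_desc txs i0 a0 c)"
  by (simp add: out_edges_desc_def)

lemma pv_frame:
  "\<not> (i \<in> G_edges txs i0 a0 \<and> tsrc (txs!i) = c) \<Longrightarrow>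
   snd (process_vertex init txs i0 a0 st c) i = snd st i"
  by (cases st) (simp add: process_vertex_def Let_def dist_frame out_set)

lemma fold_frame:
  "(i \<notin> G_edges txs i0 a0 \<or> tsrc (txs!i) \<notin> set M) \<Longrightarrow>
   snd (foldl (process_vertex init txs i0 a0) st M) i = snd st i"
  by (induction M arbitrary: st) (auto simp: pv_frame)

lemma pv_fst:
  assumes "\<forall>i\<in>G_edges txs i0 a0. tsrc (txs!i) = c \<longrightarrow> snd st i = 0"
  shows "fst (process_vertex init txs i0 a0 st c) b = fst st b +
     (\<Sum>i\<in>{i\<in>G_edges txs i0 a0. tsrc (txs!i) = c \<and> tdst (txs!i) = b}.
         snd (process_vertex init txs i0 a0 st c) i)"
proof (cases st)
  case (Pair og ob)
  have "{i\<in>set (out_edges_desc txs i0 a0 c). tdst (txs!i) = b}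
       = {i\<in>G_edges txs i0 a0. tsrc (txs!i) = c \<and> tdst (txs!i) = b}"
    by (auto simp: out_set)
  moreover have "\<forall>i\<in>set (out_edges_desc txs i0 a0 c). ob i = 0"
    using assms Pair by (auto simp: out_set)
  ultimately show ?thesis using Pair
    by (simp add: process_vertex_def Let_def dist_fst[OF out_distinct])
qed

lemma fold_fst:
  "distinct M \<Longrightarrow> (\<forall>i\<in>G_edges txs i0 a0. tsrc (txs!i) \<in> set M \<longrightarrow> snd st i = 0) \<Longrightarrow>
   fst (foldl (process_vertex init txs i0 a0) st M) b = fst st b +
     (\<Sum>i\<in>{i\<in>G_edges txs i0 a0. tsrc (txs!i) \<in> set M \<and> tdst (txs!i) = b}.
         snd (foldl (process_vertex init txs i0 a0) st M) i)"
proof (induction M arbitrary: st)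
  case Nil then show ?case by simp
next
  case (Cons c M)
  let ?P = "process_vertex init txs i0 a0"
  let ?E = "G_edges txs i0 a0"
  define st' where "st' = ?P st c"
  define F where "F = foldl ?P st' M"
  have cM: "c \<notin> set M" using Cons.prems by simp
  have pre: "\<forall>i\<in>?E. tsrc (txs!i) \<in> set M \<longrightarrow> snd st' i = 0"
  proof (intro ballI impI)
    fix i assume i: "i \<in> ?E" "tsrc (txs!i) \<in> set M"
    then have "tsrc (txs!i) \<noteq> c" using cM by auto
    then have "snd st' i = snd st i" unfolding st'_def by (intro pv_frame) auto
    then show "snd st' i = 0" using Cons.prems i by auto
  qed
  have IH: "fst F b = fst st' b + (\<Sum>i\<in>{i\<in>?E. tsrc (txs!i) \<in> set M \<and> tdst (txs!i) = b}. snd F i)"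
    unfolding F_def using Cons.prems pre by (intro Cons.IH) auto
  have st'b: "fst st' b = fst st b + (\<Sum>i\<in>{i\<in>?E. tsrc (txs!i) = c \<and> tdst (txs!i) = b}. snd st' i)"
    unfolding st'_def using Cons.prems by (intro pv_fst) auto
  have eqc: "(\<Sum>i\<in>{i\<in>?E. tsrc (txs!i) = c \<and> tdst (txs!i) = b}. snd st' i)
           = (\<Sum>i\<in>{i\<in>?E. tsrc (txs!i) = c \<and> tdst (txs!i) = b}. snd F i)"
    unfolding F_def using cM by (intro sum.cong) (auto simp: fold_frame)
  have un: "{i\<in>?E. tsrc (txs!i) \<in> set (c#M) \<and> tdst (txs!i) = b}
       = {i\<in>?E. tsrc (txs!i) = c \<and> tdst (txs!i) = b} \<union> {i\<in>?E. tsrc (txs!i) \<in> set M \<and> tdst (txs!i) = b}"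
    by auto
  have fin: "finite {i\<in>?E. tsrc (txs!i) = c \<and> tdst (txs!i) = b}"
            "finite {i\<in>?E. tsrc (txs!i) \<in> set M \<and> tdst (txs!i) = b}"
    using finite_G_edges[of txs i0 a0] by auto
  have "(\<Sum>i\<in>{i\<in>?E. tsrc (txs!i) \<in> set (c#M) \<and> tdst (txs!i) = b}. snd F i)
      = (\<Sum>i\<in>{i\<in>?E. tsrc (txs!i) = c \<and> tdst (txs!i) = b}. snd F i)
        + (\<Sum>i\<in>{i\<in>?E. tsrc (txs!i) \<in> set M \<and> tdst (txs!i) = b}. snd F i)"
    unfolding un using fin cM by (intro sum.union_disjoint) auto
  then show ?case using IH st'b eqc by (simp add: F_def st'_def)
qed

lemma fold_Inv:
  "(\<forall>i<length txs. tval (txs!i) \<ge> 0) \<Longrightarrow> Inv txs (snd st) \<Longrightarrow>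
   Inv txs (snd (foldl (process_vertex init txs i0 a0) st M))"
proof (induction M arbitrary: st)
  case Nil then show ?case by simp
next
  case (Cons c M)
  have "Inv txs (snd (process_vertex init txs i0 a0 st c))"
  proof (cases st)
    case (Pair og ob)
    have "\<forall>i\<in>set (out_edges_desc txs i0 a0 c). tval (txs!i) \<ge> 0"
      using Cons.prems by (auto simp: out_set G_edges_def)
    then show ?thesis using Pair Cons.prems
      by (simp add: process_vertex_def Let_def dist_Inv)
  qed
  then show ?case using Cons by simp
qed

theorem theoremA2:
  fixes init :: "'a \<Rightarrow> real" and txs :: "'a tx list" and i0 :: nat and L :: "'a list"
  assumes "valid_history init txs"
    and "i0 < length txs"
    and "G_acyclic txs i0 (tdst (txs ! i0))"
    and "topo_order txs i0 (tdst (txs ! i0)) L"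
    and "j \<in> G_edges txs i0 (tdst (txs ! i0))"
  shows "snd (calc_freeze init txs i0 L) j
           \<le> obsum txs i0 (snd (calc_freeze init txs i0 L)) (tsrc (txs ! j)) j"
proof -
  note valid = assms(1) and topo = assms(4) and jE = assms(5)
  define n where "n = length txs"
  define a0 where "a0 = tdst (txs ! i0)"
  define s where "s = tval (txs ! i0)"
  define E where "E = G_edges txs i0 a0"
  define P where "P = process_vertex init txs i0 a0"
  define st0 :: "'a state" where "st0 = ((\<lambda>_. 0)(a0 := s), (\<lambda>_. 0))"
  define a where "a = tsrc (txs ! j)"
  define tv where "tv = (\<lambda>i. tval (txs ! i))"
  have calc: "calc_freeze init txs i0 L = foldl P st0 L"
    by (simp add: calc_freeze_def Let_def P_def st0_def a0_def s_def)
  have jE': "j \<in> E" using jE by (simp add: E_def a0_def)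
  have ij: "i0 < j" and jn: "j < n" and reach: "(a0, a) \<in> (after_rel txs i0)\<^sup>*"
    using jE' by (auto simp: E_def G_edges_def n_def a_def)
  have tvnn: "\<And>i. i < n \<Longrightarrow> tv i \<ge> 0"
    using valid by (simp add: valid_history_def tv_def n_def)
  have Elt: "\<And>i. i \<in> E \<Longrightarrow> i < n" using G_edges_lt by (simp add: E_def n_def)
  have dist: "distinct L" using topo by (simp add: topo_order_def)
  have topo': "\<forall>e\<in>E. \<exists>p q. p < q \<and> q < length L \<and> L ! p = tsrc (txs ! e) \<and> L ! q = tdst (txs ! e)"
    using topo by (simp add: topo_order_def E_def a0_def)
  have "a \<in> G_vertices txs i0 a0" using jE' by (auto simp: G_vertices_def E_def a_def)
  then have "a \<in> set L" using topo by (simp add: topo_order_def a0_def)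
  then obtain pre post where L: "L = pre @ a # post" by (meson split_list)
  have dL: "distinct (pre @ a # post)" using dist L by simp
  have apre: "a \<notin> set pre" and apost: "a \<notin> set post" and disj: "set pre \<inter> set post = {}"
    using dL by auto
  have noself: "tdst (txs ! j) \<noteq> a"
  proof
    assume h: "tdst (txs ! j) = a"
    obtain p q where "p < q" "q < length L" "L ! p = tsrc (txs ! j)" "L ! q = tdst (txs ! j)"
      using topo' jE' by blast
    then have "L ! p = L ! q" "p < length L" using h a_def by auto
    then show False using nth_eq_iff_index_eq[OF dist] \<open>p < q\<close> \<open>q < length L\<close> by force
  qed
  have inpre: "\<And>i. i \<in> E \<Longrightarrow> tdst (txs ! i) = a \<Longrightarrow> tsrc (txs ! i) \<in> set pre"
  proof -
    fix i assume iE: "i \<in> E" and ia: "tdst (txs ! i) = a"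
    obtain p q where pq: "p < q" "q < length L" "L ! p = tsrc (txs ! i)" "L ! q = tdst (txs ! i)"
      using topo' iE by blast
    have La: "L ! length pre = a" "length pre < length L" using L by auto
    have "q = length pre" using pq(2,4) ia La nth_eq_iff_index_eq[OF dist] by force
    then have "p < length pre" using pq by simp
    then show "tsrc (txs ! i) \<in> set pre" using pq(3) L by (metis nth_append nth_mem)
  qed
  define st1 where "st1 = foldl P st0 pre"
  define st2 where "st2 = P st1 a"
  define F where "F = foldl P st2 post"
  have calcF: "calc_freeze init txs i0 L = F"
    unfolding calc by (simp add: L F_def st2_def st1_def)
  have Ffr: "\<And>i. i \<in> E \<Longrightarrow> tsrc (txs ! i) \<in> set pre \<Longrightarrow> snd F i = snd st1 i"
  proof -
    fix i assume "i \<in> E" "tsrc (txs ! i) \<in> set pre"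
    then have "tsrc (txs ! i) \<notin> set post" "tsrc (txs ! i) \<noteq> a" using disj apre by auto
    then show "snd F i = snd st1 i"
      unfolding F_def st2_def P_def by (simp add: fold_frame pv_frame)
  qed
  have Fj: "snd F j = snd st2 j"
    unfolding F_def P_def using apost by (simp add: fold_frame a_def)
  have st1j: "snd st1 j = 0"
    unfolding st1_def P_def using apre by (simp add: fold_frame a_def st0_def)
  define S0 where "S0 = (if a = a0 then s else 0)"
  define tau where "tau = fst st1 a"
  have "tau = fst st0 a + (\<Sum>i\<in>{i\<in>E. tsrc (txs!i) \<in> set pre \<and> tdst (txs!i) = a}. snd st1 i)"
    unfolding tau_def st1_def P_def E_def
    using dL by (intro fold_fst) (auto simp: st0_def)
  also have "{i\<in>E. tsrc (txs!i) \<in> set pre \<and> tdst (txs!i) = a} = {i\<in>E. tdst (txs!i) = a}"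
    using inpre by auto
  also have "(\<Sum>i\<in>{i\<in>E. tdst (txs!i) = a}. snd st1 i) = (\<Sum>i\<in>{i\<in>E. tdst (txs!i) = a}. snd F i)"
    using inpre Ffr by (intro sum.cong) auto
  finally have tau: "tau = S0 + (\<Sum>i\<in>{i\<in>E. tdst (txs!i) = a}. snd F i)"
    by (simp add: st0_def S0_def)
  have InvF: "Inv txs (snd F)"
    unfolding calcF[symmetric] calc P_def
    using valid by (intro fold_Inv) (auto simp: valid_history_def st0_def Inv_def)
  have Fnn: "\<And>i. snd F i \<ge> 0" and Fle: "\<And>i. i < n \<Longrightarrow> snd F i \<le> tv i"
    using InvF tvnn by (auto simp: Inv_def tv_def) (metis max.absorb2 tv_def)
  define Q where "Q = (\<lambda>i. i \<in> E \<and> tsrc (txs ! i) = a)"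
  have up: "[0..<n] = [0..<j] @ j # [Suc j..<n]"
  proof -
    have "[0..<n] = [0..<j] @ [j..<n]" using jn by (metis le0 less_imp_le upt_add_eq_append add_0 le_add_diff_inverse)
    also have "[j..<n] = j # [Suc j..<n]" using jn by (simp add: upt_conv_Cons)
    finally show ?thesis .
  qed
  define xs where "xs = rev (filter Q [Suc j..<n])"
  have out: "out_edges_desc txs i0 a0 a = xs @ j # rev (filter Q [0..<j])"
    unfolding out_edges_desc_def xs_def up[unfolded n_def]
    using jE' by (simp add: Q_def E_def a_def n_def)
  define tau' where "tau' = tau - min tau (Bal init txs a)"
  have st2eq: "st2 = distribute txs (xs @ j # rev (filter Q [0..<j])) tau' (fst st1, snd st1)"
    unfolding st2_def P_def process_vertex_def by (simp add: out tau'_def tau_def Let_def)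
  have key: "snd st2 j \<le> max 0 (tau' - sum_list (map tv xs))"
    unfolding st2eq tv_def
  proof (rule dist_key)
    show "distinct (xs @ j # rev (filter Q [0..<j]))"
      using out_distinct[of txs i0 a0 a] out by simp
    show "snd st1 j = 0" by (rule st1j)
    show "\<forall>i\<in>set xs. 0 \<le> tval (txs ! i)" using tvnn by (auto simp: xs_def tv_def)
  qed
  define SL where "SL = (\<Sum>i\<in>{k\<in>{Suc j..<n}. Q k}. tv i)"
  have "sum_list (map tv xs) = (\<Sum>i\<in>set xs. tv i)"
    by (rule sum_list_distinct_conv_sum_set) (simp add: xs_def)
  also have "set xs = {k\<in>{Suc j..<n}. Q k}" by (auto simp: xs_def)
  finally have sumxs: "sum_list (map tv xs) = SL" by (simp add: SL_def)
  define d where "d = (\<lambda>i. (if tdst (txs ! i) = a then tval (txs ! i) else 0)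
                    - (if tsrc (txs ! i) = a then tval (txs ! i) else 0))"
  have "(\<Sum>k<n. d k) = (\<Sum>k<Suc j. d k) + (\<Sum>k\<in>{Suc j..<n}. d k)"
    using sum.atLeastLessThan_concat[of 0 "Suc j" n d] jn by (simp add: atLeast0LessThan)
  then have Bal: "Bal init txs a = bal_after init txs (Suc j) a + (\<Sum>k\<in>{Suc j..<n}. d k)"
    by (simp add: Bal_def bal_after_def d_def n_def)
  have b1: "bal_after init txs (Suc j) a \<ge> 0"
    using valid jn by (simp add: valid_history_def n_def)
  define In where "In = (\<Sum>k\<in>{Suc j..<n}. (if tdst (txs ! k) = a then tv k else 0))"
  have "(\<Sum>k\<in>{Suc j..<n}. d k) = In - (\<Sum>k\<in>{Suc j..<n}. (if tsrc (txs ! k) = a then tv k else 0))"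
    unfolding d_def In_def tv_def by (simp add: sum_subtractf)
  also have "(\<Sum>k\<in>{Suc j..<n}. (if tsrc (txs ! k) = a then tv k else 0)) = (\<Sum>k\<in>{k\<in>{Suc j..<n}. tsrc (txs ! k) = a}. tv k)"
    by (rule sum.inter_filter[symmetric]) simp
  also have "{k\<in>{Suc j..<n}. tsrc (txs ! k) = a} = {k\<in>{Suc j..<n}. Q k}"
  proof -
    have "\<And>k. Suc j \<le> k \<Longrightarrow> k < n \<Longrightarrow> tsrc (txs ! k) = a \<Longrightarrow> k \<in> E"
      using ij reach by (auto simp: E_def G_edges_def n_def)
    then show ?thesis by (auto simp: Q_def)
  qed
  finally have dsum: "(\<Sum>k\<in>{Suc j..<n}. d k) = In - SL" by (simp add: SL_def)
  define C where "C = (\<Sum>i\<in>{k\<in>{Suc j..<n}. k \<in> E \<and> tdst (txs ! k) = a}. snd F i)"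
  have "C = (\<Sum>k\<in>{Suc j..<n}. (if k \<in> E \<and> tdst (txs ! k) = a then snd F k else 0))"
    unfolding C_def by (rule sum.inter_filter) simp
  also have "\<dots> \<le> In" unfolding In_def
    using Fle tvnn by (intro sum_mono) auto
  finally have CIn: "C \<le> In" .
  define B where "B = (\<Sum>i\<in>{i\<in>E. tdst (txs!i) = a \<and> i < j}. snd F i)"
  have seteq: "{i\<in>E. tdst (txs!i) = a} = {i\<in>E. tdst (txs!i) = a \<and> i < j} \<union> {k\<in>{Suc j..<n}. k \<in> E \<and> tdst (txs ! k) = a}"
    using noself Elt by (auto simp: not_less_eq) (metis Suc_leI linorder_neqE_nat)
  have finE: "finite E" using finite_G_edges[of txs i0 a0] by (simp add: E_def)
  have "(\<Sum>i\<in>{i\<in>E. tdst (txs!i) = a}. snd F i) = B + C"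
    unfolding B_def C_def seteq
    by (rule sum.union_disjoint) (use finE in auto)
  then have tauBC: "tau = S0 + B + C" using tau by simp
  have obs: "obsum txs i0 (snd F) a j = S0 + B"
    unfolding obsum_def using ij by (simp add: S0_def a0_def s_def B_def E_def)
  have S0nn: "S0 \<ge> 0" using tvnn assms(2) by (simp add: S0_def s_def tv_def n_def)
  have Bnn: "B \<ge> 0" unfolding B_def using Fnn by (intro sum_nonneg) auto
  have SLnn: "SL \<ge> 0" unfolding SL_def using tvnn by (intro sum_nonneg) auto
  have "snd F j \<le> max 0 (tau' - SL)" using key Fj sumxs by simp
  also have "\<dots> \<le> S0 + B"
    using tauBC Bal dsum CIn b1 S0nn Bnn SLnn
    unfolding tau'_def by (simp add: min_def max_def)
  finally show ?thesis using obs calcF by (simp add: a_def)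
qed

end
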